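(* Let $\mathfrak g$ be an $8$-dimensional real nilpotent Lie algebra with a complex structure $J$ for which there is a basis $\{\omega^1,\omega^2,\omega^3,\omega^4\}$ of $(1,0)$-forms satisfying $d\omega^1=0$, $d\omega^2=\varepsilon\,\omega^{1\bar1}$, $d\omega^3=\omega^{14}+\omega^{1\bar4}+a\,\omega^{2\bar1}+i\delta\varepsilon b\,\omega^{1\bar2}$, $d\omega^4=i\nu\,\omega^{1\bar1}+b\,\omega^{2\bar2}+i\delta(\omega^{1\bar3}-\omega^{3\bar1})$, with $\varepsilon=1$, $\delta\in\{1,-1\}$, $\nu\in\{0,1\}$ and real numbers $a>0$, $b\neq0$. Let $\Theta(\delta,\nu,a,b)=\big((a-b)^2-2\delta\nu b\big)\big((a+b)^2-2\delta\nu b\big)$. Then $E_1^{0,2}(\mathfrak g,J)=E_2^{0,2}(\mathfrak g,J)=\langle[\omega^{\bar1\bar2}],[\omega^{\bar1\bar3}],[\omega^{\bar2\bar4}],[\omega^{\bar3\bar4}]\rangle$, and $$E_2^{0,2}(\mathfrak g,J)\neq E_3^{0,2}(\mathfrak g,J)\iff \Theta(\delta,\nu,a,b)\neq0.$$ Moreover, when $\Theta(\delta,\nu,a,b)\neq0$, one has $E_r^{0,2}(\mathfrak g,J)=\langle[\omega^{\bar1\bar2}],[\omega^{\bar1\bar3}],[\omega^{\bar2\bar4}]\rangle$ for every $r\ge3$.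
   Context: Notation: $\omega^{jk}=\omega^j\wedge\omega^k$, $\omega^{j\bar k}=\omega^j\wedge\overline{\omega^k}$, $\omega^{\bar j\bar k}=\overline{\omega^j}\wedge\overline{\omega^k}$. For a Lie algebra $\mathfrak g$ with integrable complex structure $J$, $E_r^{p,q}(\mathfrak g,J)$ is the $r$-th page in bidegree $(p,q)$ of the Frölicher spectral sequence of the double complex $(\Lambda^{*,*}(\mathfrak g,J),\partial,\bar\partial)$ of (complex) forms on $\mathfrak g$ of bidegree $(p,q)$ with respect to $J$, where $d=\partial+\bar\partial$ is the Chevalley–Eilenberg differential; $E_1^{p,q}$ is the $\bar\partial$-cohomology and $d_r$ has bidegree $(r,1-r)$. *)

theory Defs
  imports Complex_Main
begin

text \<open>Concrete model of the complexified Chevalley--Eilenberg complex of the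
8-dimensional Lie algebra given by the structure equations.
Generators: index k-1 stands for omega^k (k=1..4), index k+3 stands for the
conjugate form omega^{bar k}.  A (complex) form is a coefficient function on
finite subsets S of {0..<8}; the subset S = {s1<...<sm} represents the monomial
e_{s1} wedge ... wedge e_{sm}.\<close>

type_synonym form = "nat set \<Rightarrow> complex"

definition fzero :: form where "fzero = (\<lambda>_. 0)"
definition fadd :: "form \<Rightarrow> form \<Rightarrow> form" where "fadd \<alpha> \<beta> = (\<lambda>S. \<alpha> S + \<beta> S)"
definition fscale :: "complex \<Rightarrow> form \<Rightarrow> form" where "fscale c \<alpha> = (\<lambda>S. c * \<alpha> S)"

definition mono :: "nat set \<Rightarrow> form" where "mono T = (\<lambda>S. if S = T then 1 else 0)"
definition gen :: "nat \<Rightarrow> form" where "gen i = mono {i}"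

text \<open>sign of e_S wedge e_T = wsign S T * e_(S union T) for disjoint S, T\<close>
definition wsign :: "nat set \<Rightarrow> nat set \<Rightarrow> complex" where
  "wsign S T = (-1) ^ card {(s,t). s \<in> S \<and> t \<in> T \<and> t < s}"

definition wedge :: "form \<Rightarrow> form \<Rightarrow> form" where
  "wedge \<alpha> \<beta> = (\<lambda>U. \<Sum>S\<in>Pow U. wsign S (U - S) * \<alpha> S * \<beta> (U - S))"

definition w2 :: "nat \<Rightarrow> nat \<Rightarrow> form" where "w2 j k = wedge (gen j) (gen k)"

definition barix :: "nat \<Rightarrow> nat" where "barix i = (if i < 4 then i + 4 else i - 4)"
definition wedge_list :: "nat list \<Rightarrow> form" where
  "wedge_list is = foldr (\<lambda>i \<beta>. wedge (gen i) \<beta>) is (mono {})"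
definition cconj :: "form \<Rightarrow> form" where
  "cconj \<alpha> = (\<lambda>U. \<Sum>S\<in>Pow {..<8}. cnj (\<alpha> S) * wedge_list (map barix (sorted_list_of_set S)) U)"

definition struct_eq :: "real \<Rightarrow> real \<Rightarrow> real \<Rightarrow> real \<Rightarrow> real \<Rightarrow> nat \<Rightarrow> form" where
  "struct_eq \<epsilon> \<delta> \<nu> a b j = (let
     d1 = fzero;
     d2 = fscale (of_real \<epsilon>) (w2 0 4);
     d3 = fadd (w2 0 3) (fadd (w2 0 7) (fadd (fscale (of_real a) (w2 1 4))
             (fscale (\<i> * of_real (\<delta> * \<epsilon> * b)) (w2 0 5))));
     d4 = fadd (fscale (\<i> * of_real \<nu>) (w2 0 4)) (fadd (fscale (of_real b) (w2 1 5))
             (fscale (\<i> * of_real \<delta>) (fadd (w2 0 6) (fscale (-1) (w2 2 4)))));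
     dh = (\<lambda>k. if k = 0 then d1 else if k = 1 then d2 else if k = 2 then d3 else d4)
   in if j < 4 then dh j else if j < 8 then cconj (dh (j - 4)) else fzero)"

text \<open>Extension of d to all forms as an antiderivation:
 d(e_S) = sum_{j in S} (-1)^{#{i in S, i<j}} d(e_j) wedge e_{S-{j}}.\<close>
definition dmono :: "(nat \<Rightarrow> form) \<Rightarrow> nat set \<Rightarrow> form" where
  "dmono dg S = (\<lambda>U. \<Sum>j\<in>S. (-1) ^ card {i\<in>S. i < j} * wedge (dg j) (mono (S - {j})) U)"

definition dform :: "(nat \<Rightarrow> form) \<Rightarrow> form \<Rightarrow> form" where
  "dform dg \<alpha> = (\<lambda>U. \<Sum>S\<in>Pow {..<8}. \<alpha> S * dmono dg S U)"

definition nunb :: "nat set \<Rightarrow> nat" where "nunb S = card (S \<inter> {..<4})"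
definition nbar :: "nat set \<Rightarrow> nat" where "nbar S = card (S \<inter> {4..<8})"

definition del :: "(nat \<Rightarrow> form) \<Rightarrow> form \<Rightarrow> form" where
  "del dg \<alpha> = (\<lambda>U. \<Sum>S\<in>Pow {..<8}.
      if nunb U = nunb S + 1 \<and> nbar U = nbar S then \<alpha> S * dmono dg S U else 0)"
definition dbar :: "(nat \<Rightarrow> form) \<Rightarrow> form \<Rightarrow> form" where
  "dbar dg \<alpha> = (\<lambda>U. \<Sum>S\<in>Pow {..<8}.
      if nunb U = nunb S \<and> nbar U = nbar S + 1 then \<alpha> S * dmono dg S U else 0)"

text \<open>forms of bidegree (p,q) (the zero space for negative p or q)\<close>
definition Aform :: "int \<Rightarrow> int \<Rightarrow> form set" where
  "Aform p q = {\<alpha>. \<forall>S. \<alpha> S \<noteq> 0 \<longrightarrow> S \<subseteq> {..<8} \<and> int (nunb S) = p \<and> int (nbar S) = q}"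

text \<open>Frolicher spectral sequence, r >= 1: E_r^{p,q} = Zr r p q / Br r p q
 (the standard zig-zag description of the pages).\<close>
definition Zr :: "(nat \<Rightarrow> form) \<Rightarrow> nat \<Rightarrow> int \<Rightarrow> int \<Rightarrow> form set" where
  "Zr dg r p q = {\<alpha> \<in> Aform p q. dbar dg \<alpha> = fzero \<and>
     (\<exists>xs. length xs = r - 1 \<and>
        (\<forall>i<r-1. xs ! i \<in> Aform (p + int i + 1) (q - int i - 1)) \<and>
        (\<forall>i<r-1. fadd (del dg ((\<alpha> # xs) ! i)) (dbar dg (xs ! i)) = fzero))}"

definition Br :: "(nat \<Rightarrow> form) \<Rightarrow> nat \<Rightarrow> int \<Rightarrow> int \<Rightarrow> form set" where
  "Br dg r p q = {fadd (if r \<ge> 2 then del dg (hd bs) else fzero) (dbar dg \<gamma>) | \<gamma> bs.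
     \<gamma> \<in> Aform p (q - 1) \<and> length bs = r - 1 \<and>
     (\<forall>i<r-1. bs ! i \<in> Aform (p - 1 - int i) (q + int i)) \<and>
     (\<forall>i. i + 1 < r - 1 \<longrightarrow> fadd (dbar dg (bs ! i)) (del dg (bs ! (i + 1))) = fzero) \<and>
     (r \<ge> 2 \<longrightarrow> dbar dg (bs ! (r - 2)) = fzero)}"

definition lincomb :: "complex list \<Rightarrow> form list \<Rightarrow> form" where
  "lincomb cs vs = (\<lambda>S. \<Sum>i<length vs. cs ! i * (vs ! i) S)"

definition Epage_spanned :: "(nat \<Rightarrow> form) \<Rightarrow> nat \<Rightarrow> int \<Rightarrow> int \<Rightarrow> form list \<Rightarrow> bool" where
  "Epage_spanned dg r p q vs \<longleftrightarrow> set vs \<subseteq> Zr dg r p q \<and>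
     (\<forall>\<alpha>\<in>Zr dg r p q. \<exists>cs \<beta>. length cs = length vs \<and> \<beta> \<in> Br dg r p q \<and> \<alpha> = fadd (lincomb cs vs) \<beta>)"

text \<open>E_r^{p,q} = E_s^{p,q} (the intermediate differentials vanish at (p,q))\<close>
definition Epage_eq :: "(nat \<Rightarrow> form) \<Rightarrow> nat \<Rightarrow> nat \<Rightarrow> int \<Rightarrow> int \<Rightarrow> bool" where
  "Epage_eq dg r s p q \<longleftrightarrow> Zr dg r p q = Zr dg s p q \<and> Br dg r p q = Br dg s p q"

end

theory Submission
  imports Defs
begin


definition sset :: "nat list \<Rightarrow> nat set" where "sset k = set k"

fun lc :: "(complex \<times> nat list) list \<Rightarrow> form" where
  "lc [] = fzero"
| "lc (x # L) = fadd (fscale (fst x) (mono (sset (snd x)))) (lc L)"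

lemma lc_apply: "lc L U = (\<Sum>x\<leftarrow>L. fst x * mono (sset (snd x)) U)"
  by (induction L) (auto simp: fzero_def fadd_def fscale_def)

lemma lc_append: "lc (L @ M) = fadd (lc L) (lc M)"
  by (rule ext) (simp add: lc_apply fadd_def)

definition scl :: "complex \<Rightarrow> (complex \<times> nat list) list \<Rightarrow> (complex \<times> nat list) list" where
  "scl c L = map (\<lambda>x. (c * fst x, snd x)) L"

lemma lc_scl: "lc (scl c L) = fscale c (lc L)"
  by (rule ext) (simp add: lc_apply fscale_def scl_def sum_list_const_mult o_def mult.assoc)

definition coeffat :: "(complex \<times> nat list) list \<Rightarrow> nat list \<Rightarrow> complex" where
  "coeffat L k = (\<Sum>x\<leftarrow>L. if snd x = k then fst x else 0)"

definition wfk :: "(complex \<times> nat list) list \<Rightarrow> bool" where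
  "wfk L \<longleftrightarrow> (\<forall>x\<in>set L. sorted_wrt (<) (snd x))"

lemma sset_eq: "sorted_wrt (<) k \<Longrightarrow> sorted_wrt (<) l \<Longrightarrow> sset k = sset l \<longleftrightarrow> k = l"
  unfolding sset_def by (metis strict_sorted_equal)

lemma lc_at: "wfk L \<Longrightarrow> sorted_wrt (<) k \<Longrightarrow> lc L (sset k) = coeffat L k"
  unfolding wfk_def coeffat_def lc_apply
  by (induction L) (auto simp: mono_def sset_eq)

lemma lc_out: "(\<forall>x\<in>set L. U \<noteq> sset (snd x)) \<Longrightarrow> lc L U = 0"
  unfolding lc_apply by (induction L) (auto simp: mono_def)

lemma lc_zero: "wfk L \<Longrightarrow> (\<forall>x\<in>set L. coeffat L (snd x) = 0) \<Longrightarrow> lc L = fzero"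
proof (rule ext)
  fix U assume w: "wfk L" and c: "\<forall>x\<in>set L. coeffat L (snd x) = 0"
  show "lc L U = fzero U"
  proof (cases "\<exists>x\<in>set L. U = sset (snd x)")
    case True
    then obtain x where x: "x \<in> set L" "U = sset (snd x)" by blast
    have "lc L U = coeffat L (snd x)" using x w lc_at[OF w] by (auto simp: wfk_def)
    then show ?thesis using c x by (simp add: fzero_def)
  next
    case False then show ?thesis using lc_out by (auto simp: fzero_def)
  qed
qed

lemma coeffat_app: "coeffat (L @ M) k = coeffat L k + coeffat M k"
  by (simp add: coeffat_def)
lemma coeffat_scl: "coeffat (scl c L) k = c * coeffat L k"
  unfolding coeffat_def scl_def by (induction L) (auto simp: algebra_simps)

lemma lc_eq: assumes "wfk L" "wfk M" "\<forall>x\<in>set (L @ M). coeffat L (snd x) = coeffat M (snd x)"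
  shows "lc L = lc M"
proof -
  have "lc (L @ scl (-1) M) = fzero"
  proof (rule lc_zero)
    show "wfk (L @ scl (-1) M)" using assms by (auto simp: wfk_def scl_def)
    have "\<forall>x\<in>set (L @ M). coeffat (L @ scl (-1) M) (snd x) = 0"
      using assms(3) by (simp add: coeffat_app coeffat_scl)
    moreover have "snd ` set (L @ scl (-1) M) = snd ` set (L @ M)"
      by (force simp: scl_def)
    ultimately show "\<forall>x\<in>set (L @ scl (-1) M). coeffat (L @ scl (-1) M) (snd x) = 0"
      by (smt (verit, best) image_iff)
  qed
  then have "\<And>U. lc L U + (-1) * lc M U = 0"
    by (metis lc_append lc_scl fadd_def fscale_def fzero_def)
  then show ?thesis by (intro ext) (simp add: algebra_simps)
qed

lemma wedge_fadd_left: "wedge (fadd \<alpha> \<beta>) \<gamma> = fadd (wedge \<alpha> \<gamma>) (wedge \<beta> \<gamma>)"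
  by (rule ext) (simp add: wedge_def fadd_def algebra_simps sum.distrib)
lemma wedge_fadd_right: "wedge \<gamma> (fadd \<alpha> \<beta>) = fadd (wedge \<gamma> \<alpha>) (wedge \<gamma> \<beta>)"
  by (rule ext) (simp add: wedge_def fadd_def algebra_simps sum.distrib)
lemma wedge_fscale_left: "wedge (fscale c \<alpha>) \<beta> = fscale c (wedge \<alpha> \<beta>)"
  by (rule ext) (simp add: wedge_def fscale_def algebra_simps sum_distrib_left)
lemma wedge_fscale_right: "wedge \<alpha> (fscale c \<beta>) = fscale c (wedge \<alpha> \<beta>)"
  by (rule ext) (simp add: wedge_def fscale_def algebra_simps sum_distrib_left)
lemma wedge_fzero_left: "wedge fzero \<beta> = fzero"
  by (rule ext) (simp add: wedge_def fzero_def)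
lemma wedge_fzero_right: "wedge \<beta> fzero = fzero"
  by (rule ext) (simp add: wedge_def fzero_def)

lemma wedge_mono_mono:
  assumes "finite S" "finite T"
  shows "wedge (mono S) (mono T) = (if S \<inter> T = {} then fscale (wsign S T) (mono (S \<union> T)) else fzero)"
proof (rule ext)
  fix U
  show "wedge (mono S) (mono T) U = (if S \<inter> T = {} then fscale (wsign S T) (mono (S \<union> T)) else fzero) U"
  proof (cases "finite U")
    case True
    have "wedge (mono S) (mono T) U = (\<Sum>S'\<in>Pow U. if S' = S then wsign S (U - S) * mono T (U - S) else 0)"
      unfolding wedge_def by (intro sum.cong) (auto simp: mono_def)
    also have "\<dots> = (if S \<subseteq> U then wsign S (U - S) * mono T (U - S) else 0)"
      using True by (simp add: sum.delta')
    also have "\<dots> = (if S \<inter> T = {} then fscale (wsign S T) (mono (S \<union> T)) else fzero) U"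
    proof -
      have "(S \<subseteq> U \<and> U - S = T) \<longleftrightarrow> (S \<inter> T = {} \<and> U = S \<union> T)" by blast
      then show ?thesis by (auto simp: mono_def fscale_def fzero_def)
    qed
    finally show ?thesis .
  next
    case False
    then have "wedge (mono S) (mono T) U = 0" by (simp add: wedge_def)
    moreover have "U \<noteq> S \<union> T" using False assms by auto
    ultimately show ?thesis by (simp add: mono_def fscale_def fzero_def)
  qed
qed

lemma wsign_sset:
  assumes "distinct k" "distinct l"
  shows "wsign (sset k) (sset l) = (-1) ^ length (filter (\<lambda>(s,t). t < s) (List.product k l))"
proof -
  have "{(s,t). s \<in> set k \<and> t \<in> set l \<and> t < s} = set (filter (\<lambda>(s,t). t < s) (List.product k l))"
    by auto
  moreover have "distinct (filter (\<lambda>(s,t). t < s) (List.product k l))"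
    using assms by (simp add: distinct_product)
  ultimately show ?thesis unfolding wsign_def sset_def by (metis distinct_card)
qed

lemma sset_disj: "sset k \<inter> sset l = {} \<longleftrightarrow> list_all (\<lambda>x. x \<notin> set l) k"
  by (auto simp: sset_def list_all_iff)

lemma sset_union: "sset k \<union> sset l = sset (sort (k @ l))"
  by (simp add: sset_def)

fun wl1 :: "complex \<times> nat list \<Rightarrow> (complex \<times> nat list) list \<Rightarrow> (complex \<times> nat list) list" where
  "wl1 x [] = []"
| "wl1 x (y # M) = (if sset (snd x) \<inter> sset (snd y) = {}
      then [(fst x * fst y * wsign (sset (snd x)) (sset (snd y)), sort (snd x @ snd y))] else []) @ wl1 x M"

fun wl :: "(complex \<times> nat list) list \<Rightarrow> (complex \<times> nat list) list \<Rightarrow> (complex \<times> nat list) list" where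
  "wl [] M = []"
| "wl (x # L) M = wl1 x M @ wl L M"

lemma fadd_fzero_right: "fadd \<alpha> fzero = \<alpha>" by (simp add: fadd_def fzero_def)
lemma fadd_fzero_left: "fadd fzero \<alpha> = \<alpha>" by (simp add: fadd_def fzero_def)
lemma fscale_fscale: "fscale c (fscale d \<alpha>) = fscale (c * d) \<alpha>" by (simp add: fscale_def fun_eq_iff)
lemma fscale_fzero: "fscale c fzero = fzero" by (simp add: fscale_def fzero_def)

lemma wedge_wl1: "wedge (fscale (fst x) (mono (sset (snd x)))) (lc M) = lc (wl1 x M)"
proof (induction M)
  case Nil then show ?case by (simp add: wedge_fzero_right)
next
  case (Cons y M)
  have fin: "finite (sset k)" for k by (simp add: sset_def)
  show ?case
    using Cons by (simp add: wedge_fadd_right wedge_fscale_right wedge_fscale_left wedge_mono_mono fin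
        lc_append fscale_fscale fscale_fzero fadd_fzero_left fadd_fzero_right sset_union mult.commute mult.left_commute)
qed

lemma wedge_lc: "wedge (lc L) (lc M) = lc (wl L M)"
  by (induction L) (simp_all add: wedge_fzero_left wedge_fadd_left wedge_wl1 lc_append)

lemma cconj_fadd: "cconj (fadd \<alpha> \<beta>) = fadd (cconj \<alpha>) (cconj \<beta>)"
  by (rule ext) (simp add: cconj_def fadd_def algebra_simps sum.distrib)
lemma cconj_fscale: "cconj (fscale c \<alpha>) = fscale (cnj c) (cconj \<alpha>)"
  by (rule ext) (simp add: cconj_def fscale_def algebra_simps sum_distrib_left)
lemma cconj_fzero: "cconj fzero = fzero"
  by (rule ext) (simp add: cconj_def fzero_def)
lemma cconj_mono: "cconj (mono T) = (if T \<subseteq> {..<8} then wedge_list (map barix (sorted_list_of_set T)) else fzero)"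
proof (rule ext)
  fix U
  have "cconj (mono T) U = (\<Sum>S\<in>Pow {..<8}. if S = T then wedge_list (map barix (sorted_list_of_set S)) U else 0)"
    unfolding cconj_def by (intro sum.cong) (auto simp: mono_def)
  also have "\<dots> = (if T \<subseteq> {..<8} then wedge_list (map barix (sorted_list_of_set T)) else fzero) U"
    by (simp add: sum.delta' fzero_def)
  finally show "cconj (mono T) U = (if T \<subseteq> {..<8} then wedge_list (map barix (sorted_list_of_set T)) else fzero) U" .
qed

fun WL :: "nat list \<Rightarrow> (complex \<times> nat list) list" where
  "WL [] = [(1, [])]"
| "WL (i # is) = wl [(1, [i])] (WL is)"

lemma gen_lc: "gen i = lc [(1, [i])]"
  by (simp add: gen_def sset_def fadd_fzero_right fscale_def)
lemma mono_empty_lc: "mono {} = lc [(1, [])]"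
  by (simp add: sset_def fadd_fzero_right fscale_def)
lemma mono_sset_lc: "mono (sset k) = lc [(1, k)]"
  by (simp add: fadd_fzero_right fscale_def)

lemma wedge_list_lc: "wedge_list is = lc (WL is)"
proof (induction "is")
  case Nil then show ?case by (simp add: wedge_list_def mono_empty_lc del: lc.simps)
next
  case (Cons i "is")
  then show ?case by (simp add: wedge_list_def gen_lc wedge_lc del: lc.simps wl.simps)
qed

fun CL :: "(complex \<times> nat list) list \<Rightarrow> (complex \<times> nat list) list" where
  "CL [] = []"
| "CL (x # L) = scl (cnj (fst x)) (WL (map barix (snd x))) @ CL L"

lemma sorted_list_sset: "sorted_wrt (<) k \<Longrightarrow> sorted_list_of_set (sset k) = k"
  unfolding sset_def
  by (simp add: strict_sorted_iff sorted_list_of_set.idem_if_sorted_distinct)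

lemma cconj_lc: "\<forall>x\<in>set L. sorted_wrt (<) (snd x) \<and> list_all (\<lambda>i. i < 8) (snd x) \<Longrightarrow> cconj (lc L) = lc (CL L)"
proof (induction L)
  case Nil then show ?case by (simp add: cconj_fzero)
next
  case (Cons x L)
  have "sset (snd x) \<subseteq> {..<8}" using Cons.prems by (auto simp: sset_def list_all_iff)
  then show ?case using Cons
    by (simp add: cconj_fadd cconj_fscale cconj_mono sorted_list_sset wedge_list_lc lc_append lc_scl)
qed

lemma fadd_lc: "fadd (lc L) (lc M) = lc (L @ M)" by (simp add: lc_append)
lemma fscale_lc: "fscale c (lc L) = lc (scl c L)" by (simp add: lc_scl)
lemma fzero_lc: "fzero = lc []" by simp
lemma w2_lc: "w2 j k = lc (wl [(1,[j])] [(1,[k])])" unfolding w2_def gen_lc wedge_lc ..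

definition DX :: "real \<Rightarrow> real \<Rightarrow> real \<Rightarrow> real \<Rightarrow> nat \<Rightarrow> (complex \<times> nat list) list" where
  "DX \<delta> \<nu> a b j = (let d = complex_of_real \<delta>; n = complex_of_real \<nu>; A = complex_of_real a; B = complex_of_real b in
    if j = 1 then [(1,[0,4])]
    else if j = 2 then [(1,[0,3]), (\<i>*d*B,[0,5]), (1,[0,7]), (A,[1,4])]
    else if j = 3 then [(\<i>*n,[0,4]), (\<i>*d,[0,6]), (B,[1,5]), (-\<i>*d,[2,4])]
    else if j = 5 then [(-1,[0,4])]
    else if j = 6 then [(-A,[0,5]), (\<i>*d*B,[1,4]), (-1,[3,4]), (1,[4,7])]
    else if j = 7 then [(\<i>*n,[0,4]), (-\<i>*d,[0,6]), (-B,[1,5]), (\<i>*d,[2,4])]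
    else [])"

lemma wsign_simp: "distinct k \<Longrightarrow> distinct l \<Longrightarrow> wsign (sset k) (sset l) = (-1) ^ length (filter (\<lambda>(s,t). t < s) (List.product k l))"
  by (rule wsign_sset)

lemmas eng_simps = sset_disj wsign_simp coeffat_def wfk_def

lemma struct_DX_j: "struct_eq 1 \<delta> \<nu> a b j = lc (DX \<delta> \<nu> a b j)"
proof -
  have c: "j = 0 \<or> j = 1 \<or> j = 2 \<or> j = 3 \<or> j = 4 \<or> j = 5 \<or> j = 6 \<or> j = 7 \<or> j \<ge> 8" by linarith
  have "j \<ge> 8 \<Longrightarrow> ?thesis" by (simp add: struct_eq_def DX_def)
  moreover have "j = 0 \<or> j = 4 \<Longrightarrow> ?thesis" by (auto simp add: struct_eq_def DX_def cconj_fzero)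
  moreover have "j \<in> {1,2,3,5,6,7} \<Longrightarrow> ?thesis"
    by (auto simp add: struct_eq_def DX_def Let_def w2_lc fadd_lc fscale_lc sset_disj wsign_simp scl_def barix_def cconj_lc
        simp del: lc.simps intro!: lc_eq) (simp_all add: coeffat_def wfk_def)
  ultimately show ?thesis using c by blast
qed
lemma struct_DX: "struct_eq 1 \<delta> \<nu> a b = (\<lambda>j. lc (DX \<delta> \<nu> a b j))"
  using struct_DX_j by blast

lemma lc_concat: "lc (concat (map f xs)) = (\<lambda>U. \<Sum>j\<leftarrow>xs. lc (f j) U)"
  by (induction xs) (simp_all add: lc_append fadd_def fzero_def)

definition DMk :: "(nat \<Rightarrow> (complex \<times> nat list) list) \<Rightarrow> nat list \<Rightarrow> (complex \<times> nat list) list" where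
  "DMk G k = concat (map (\<lambda>j. scl ((-1) ^ length (filter (\<lambda>i. i < j) k)) (wl (G j) [(1, remove1 j k)])) k)"

lemma dmono_lc: assumes "distinct k" shows "dmono (\<lambda>j. lc (G j)) (sset k) = lc (DMk G k)"
proof (rule ext)
  fix U
  have cd: "card {i \<in> set k. i < j} = length (filter (\<lambda>i. i < j) k)" for j
  proof -
    have "{i \<in> set k. i < j} = set (filter (\<lambda>i. i < j) k)" by auto
    then show ?thesis using assms by (metis distinct_card distinct_filter)
  qed
  have "dmono (\<lambda>j. lc (G j)) (sset k) U = (\<Sum>j\<leftarrow>k. (-1) ^ card {i \<in> set k. i < j} * wedge (lc (G j)) (mono (set k - {j})) U)"
    unfolding dmono_def sset_def using assms by (simp add: sum_list_distinct_conv_sum_set)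
  also have "\<dots> = (\<Sum>j\<leftarrow>k. lc (scl ((-1) ^ length (filter (\<lambda>i. i < j) k)) (wl (G j) [(1, remove1 j k)])) U)"
    using assms by (intro arg_cong[where f=sum_list] map_cong refl)
       (simp add: cd lc_scl fscale_def mono_sset_lc[unfolded sset_def, symmetric] wedge_lc[symmetric] sset_def del: lc.simps)
  finally show "dmono (\<lambda>j. lc (G j)) (sset k) U = lc (DMk G k) U"
    by (simp add: DMk_def lc_concat)
qed

definition opc :: "(nat set \<Rightarrow> nat set \<Rightarrow> bool) \<Rightarrow> (nat \<Rightarrow> form) \<Rightarrow> form \<Rightarrow> form" where
  "opc c dg \<alpha> = (\<lambda>U. \<Sum>S\<in>Pow {..<8}. if c U S then \<alpha> S * dmono dg S U else 0)"

definition cdel :: "nat set \<Rightarrow> nat set \<Rightarrow> bool" where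
  "cdel U S \<longleftrightarrow> nunb U = nunb S + 1 \<and> nbar U = nbar S"
definition cdbar :: "nat set \<Rightarrow> nat set \<Rightarrow> bool" where
  "cdbar U S \<longleftrightarrow> nunb U = nunb S \<and> nbar U = nbar S + 1"

lemma del_opc: "del dg = opc cdel dg"
  by (rule ext) (simp add: del_def opc_def cdel_def)
lemma dbar_opc: "dbar dg = opc cdbar dg"
  by (rule ext) (simp add: dbar_def opc_def cdbar_def)

lemma opc_fadd: "opc c dg (fadd \<alpha> \<beta>) = fadd (opc c dg \<alpha>) (opc c dg \<beta>)"
  by (rule ext) (simp add: opc_def fadd_def algebra_simps sum.distrib if_distrib[of "\<lambda>x. x + _"] sum.If_cases)
lemma opc_fscale: "opc c dg (fscale k \<alpha>) = fscale k (opc c dg \<alpha>)"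
  unfolding opc_def fscale_def by (rule ext) (simp add: sum_distrib_left, intro sum.cong, auto)
lemma opc_fzero: "opc c dg fzero = fzero"
  unfolding opc_def fzero_def by (rule ext) (intro sum.neutral, auto)
lemma opc_mono: "opc c dg (mono T) = (\<lambda>U. if T \<subseteq> {..<8} \<and> c U T then dmono dg T U else 0)"
proof (rule ext)
  fix U
  have "opc c dg (mono T) U = (\<Sum>S\<in>Pow {..<8}. if S = T then (if c U T then dmono dg T U else 0) else 0)"
    unfolding opc_def by (intro sum.cong) (auto simp: mono_def)
  then show "opc c dg (mono T) U = (if T \<subseteq> {..<8} \<and> c U T then dmono dg T U else 0)"
    by (simp add: sum.delta')
qed

lemma lc_filter: "(if P U then lc M U else 0) = lc (filter (\<lambda>y. P (sset (snd y))) M) U"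
  by (induction M) (auto simp: fadd_def fscale_def fzero_def mono_def)

definition OPL :: "(nat set \<Rightarrow> nat set \<Rightarrow> bool) \<Rightarrow> (nat \<Rightarrow> (complex \<times> nat list) list) \<Rightarrow> (complex \<times> nat list) list \<Rightarrow> (complex \<times> nat list) list" where
  "OPL c G L = concat (map (\<lambda>x. if list_all (\<lambda>i. i < 8) (snd x)
      then scl (fst x) (filter (\<lambda>y. c (sset (snd y)) (sset (snd x))) (DMk G (snd x))) else []) L)"

lemma opc_lc: "\<forall>x\<in>set L. distinct (snd x) \<Longrightarrow> opc c (\<lambda>j. lc (G j)) (lc L) = lc (OPL c G L)"
proof (induction L)
  case Nil then show ?case by (simp add: OPL_def opc_fzero)
next
  case (Cons x L)
  have d: "distinct (snd x)" using Cons.prems by simp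
  have "opc c (\<lambda>j. lc (G j)) (fscale (fst x) (mono (sset (snd x)))) =
        lc (if list_all (\<lambda>i. i < 8) (snd x)
      then scl (fst x) (filter (\<lambda>y. c (sset (snd y)) (sset (snd x))) (DMk G (snd x))) else [])"
  proof (rule ext)
    fix U
    have "opc c (\<lambda>j. lc (G j)) (fscale (fst x) (mono (sset (snd x)))) U =
       fst x * (if sset (snd x) \<subseteq> {..<8} then (if c U (sset (snd x)) then lc (DMk G (snd x)) U else 0) else 0)"
      by (simp only: opc_fscale opc_mono dmono_lc[OF d]) (simp add: fscale_def)
    also have "\<dots> = lc (if list_all (\<lambda>i. i < 8) (snd x)
      then scl (fst x) (filter (\<lambda>y. c (sset (snd y)) (sset (snd x))) (DMk G (snd x))) else []) U"
      by (subst lc_filter[where P = "\<lambda>U. c U (sset (snd x))"])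
         (auto simp: sset_def list_all_iff lc_scl fscale_def fzero_def)
    finally show "opc c (\<lambda>j. lc (G j)) (fscale (fst x) (mono (sset (snd x)))) U = lc (if list_all (\<lambda>i. i < 8) (snd x)
      then scl (fst x) (filter (\<lambda>y. c (sset (snd y)) (sset (snd x))) (DMk G (snd x))) else []) U" .
  qed
  moreover have "OPL c G (x # L) = (if list_all (\<lambda>i. i < 8) (snd x)
      then scl (fst x) (filter (\<lambda>y. c (sset (snd y)) (sset (snd x))) (DMk G (snd x))) else []) @ OPL c G L"
    by (simp add: OPL_def)
  moreover have "opc c (\<lambda>j. lc (G j)) (lc L) = lc (OPL c G L)" using Cons by simp
  ultimately show ?case by (simp only: lc.simps(2) opc_fadd lc_append)
qed

lemma nunb_sset: "distinct m \<Longrightarrow> nunb (sset m) = length (filter (\<lambda>i. i < 4) m)"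
proof -
  assume d: "distinct m"
  have "sset m \<inter> {..<4} = set (filter (\<lambda>i. i < 4) m)" by (auto simp: sset_def)
  then show ?thesis using d unfolding nunb_def by (metis distinct_card distinct_filter)
qed
lemma nbar_sset: "distinct m \<Longrightarrow> nbar (sset m) = length (filter (\<lambda>i. 4 \<le> i \<and> i < 8) m)"
proof -
  assume d: "distinct m"
  have "sset m \<inter> {4..<8} = set (filter (\<lambda>i. 4 \<le> i \<and> i < 8) m)" by (auto simp: sset_def)
  then show ?thesis using d unfolding nbar_def by (metis distinct_card distinct_filter)
qed

lemma del_lc: "\<forall>x\<in>set L. distinct (snd x) \<Longrightarrow> del (\<lambda>j. lc (G j)) (lc L) = lc (OPL cdel G L)"
  by (simp add: del_opc opc_lc del: lc.simps)
lemma dbar_lc: "\<forall>x\<in>set L. distinct (snd x) \<Longrightarrow> dbar (\<lambda>j. lc (G j)) (lc L) = lc (OPL cdbar G L)"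
  by (simp add: dbar_opc opc_lc del: lc.simps)



lemmas comp_simps [no_atp] = del_lc dbar_lc OPL_def DMk_def sset_disj wsign_simp scl_def cdel_def cdbar_def
   nunb_sset nbar_sset DX_def Let_def

fun allk :: "nat \<Rightarrow> nat list list" where
  "allk 0 = [[]]"
| "allk (Suc n) = allk n @ map (\<lambda>k. k @ [n]) (allk n)"

lemma allk_props: "k \<in> set (allk n) \<Longrightarrow> sorted_wrt (<) k \<and> set k \<subseteq> {..<n}"
proof (induction n arbitrary: k)
  case 0 then show ?case by simp
next
  case (Suc n)
  then show ?case by (auto simp: sorted_wrt_append) (fastforce)+
qed

lemma allk_cover: "S \<subseteq> {..<n} \<Longrightarrow> \<exists>k\<in>set (allk n). set k = S"
proof (induction n arbitrary: S)
  case 0 then show ?case by simp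
next
  case (Suc n)
  show ?case
  proof (cases "n \<in> S")
    case True
    have "S - {n} \<subseteq> {..<n}" using Suc.prems by auto
    then obtain k where "k \<in> set (allk n)" "set k = S - {n}" using Suc.IH by blast
    then show ?thesis using True by (intro bexI[of _ "k @ [n]"]) auto
  next
    case False
    then have "S \<subseteq> {..<n}" using Suc.prems by (force simp: less_Suc_eq)
    then show ?thesis using Suc.IH by auto
  qed
qed

lemma allk_distinct: "distinct (allk n)"
proof (induction n)
  case 0 then show ?case by simp
next
  case (Suc n)
  have nn: "n \<notin> set k" if "k \<in> set (allk n)" for k using allk_props[OF that] by auto
  have "set (allk n) \<inter> set (map (\<lambda>k. k @ [n]) (allk n)) = {}"
  proof (rule ccontr)
    assume "set (allk n) \<inter> set (map (\<lambda>k. k @ [n]) (allk n)) \<noteq> {}"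
    then obtain k where "k @ [n] \<in> set (allk n)" by auto
    then show False using nn by fastforce
  qed
  moreover have "distinct (map (\<lambda>k. k @ [n]) (allk n))" using Suc by (simp add: distinct_map inj_on_def)
  ultimately show ?case using Suc by simp
qed

definition KEYS :: "int \<Rightarrow> int \<Rightarrow> nat list list" where
  "KEYS p q = filter (\<lambda>k. int (length (filter (\<lambda>i. i < 4) k)) = p \<and> int (length (filter (\<lambda>i. 4 \<le> i \<and> i < 8) k)) = q) (allk 8)"

lemma Aform_rep: assumes "\<alpha> \<in> Aform p q" shows "\<alpha> = lc (map (\<lambda>k. (\<alpha> (sset k), k)) (KEYS p q))"
proof (rule ext)
  fix U
  have dK: "distinct (KEYS p q)" by (simp add: KEYS_def allk_distinct)
  have sK: "k \<in> set (KEYS p q) \<Longrightarrow> sorted_wrt (<) k \<and> set k \<subseteq> {..<8}" for k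
    by (auto simp: KEYS_def dest: allk_props)
  have "lc (map (\<lambda>k. (\<alpha> (sset k), k)) (KEYS p q)) U = (\<Sum>k\<leftarrow>KEYS p q. \<alpha> (sset k) * mono (sset k) U)"
    by (simp add: lc_apply o_def)
  also have "\<dots> = (\<Sum>k\<in>set (KEYS p q). \<alpha> (sset k) * mono (sset k) U)"
    using dK by (simp add: sum_list_distinct_conv_sum_set)
  also have "\<dots> = \<alpha> U"
  proof (cases "\<exists>k0\<in>set (KEYS p q). sset k0 = U")
    case True
    then obtain k0 where k0: "k0 \<in> set (KEYS p q)" "sset k0 = U" by blast
    have "(\<Sum>k\<in>set (KEYS p q). \<alpha> (sset k) * mono (sset k) U) = (\<Sum>k\<in>set (KEYS p q). if k = k0 then \<alpha> U else 0)"
    proof (intro sum.cong refl)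
      fix k assume k: "k \<in> set (KEYS p q)"
      have "sset k = sset k0 \<longleftrightarrow> k = k0" using sK[OF k] sK[OF k0(1)] by (simp add: sset_eq)
      then show "\<alpha> (sset k) * mono (sset k) U = (if k = k0 then \<alpha> U else 0)"
        using k0 by (auto simp: mono_def)
    qed
    then show ?thesis using k0 by simp
  next
    case False
    then have "(\<Sum>k\<in>set (KEYS p q). \<alpha> (sset k) * mono (sset k) U) = 0"
      by (intro sum.neutral) (auto simp: mono_def)
    moreover have "\<alpha> U = 0"
    proof (rule ccontr)
      assume nz: "\<alpha> U \<noteq> 0"
      then have U: "U \<subseteq> {..<8}" "int (nunb U) = p" "int (nbar U) = q" using assms by (auto simp: Aform_def)
      obtain k where k: "k \<in> set (allk 8)" "set k = U" using allk_cover[OF U(1)] by blast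
      have sk: "sorted_wrt (<) k" using allk_props[OF k(1)] by simp
      then have "distinct k" by (simp add: strict_sorted_iff)
      then have "k \<in> set (KEYS p q)" using k U nunb_sset[of k] nbar_sset[of k] by (auto simp: KEYS_def sset_def)
      then show False using False k by (auto simp: sset_def)
    qed
    ultimately show ?thesis by simp
  qed
  finally show "\<alpha> U = lc (map (\<lambda>k. (\<alpha> (sset k), k)) (KEYS p q)) U" ..
qed

lemma KEYS02: "KEYS 0 2 = [[4,5],[4,6],[5,6],[4,7],[5,7],[6,7]]"
  by (simp add: KEYS_def numeral_eq_Suc)


lemma Aform_fadd: "\<alpha> \<in> Aform p q \<Longrightarrow> \<beta> \<in> Aform p q \<Longrightarrow> fadd \<alpha> \<beta> \<in> Aform p q"
  unfolding Aform_def fadd_def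
proof (intro CollectI allI impI)
  fix S assume a: "\<alpha> \<in> {\<alpha>. \<forall>S. \<alpha> S \<noteq> 0 \<longrightarrow> S \<subseteq> {..<8} \<and> int (nunb S) = p \<and> int (nbar S) = q}"
    and b: "\<beta> \<in> {\<alpha>. \<forall>S. \<alpha> S \<noteq> 0 \<longrightarrow> S \<subseteq> {..<8} \<and> int (nunb S) = p \<and> int (nbar S) = q}"
    and s: "\<alpha> S + \<beta> S \<noteq> 0"
  then have "\<alpha> S \<noteq> 0 \<or> \<beta> S \<noteq> 0" by auto
  then show "S \<subseteq> {..<8} \<and> int (nunb S) = p \<and> int (nbar S) = q" using a b by blast
qed
lemma Aform_fscale: "\<alpha> \<in> Aform p q \<Longrightarrow> fscale c \<alpha> \<in> Aform p q"
  by (auto simp: Aform_def fscale_def)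
lemma Aform_fzero: "fzero \<in> Aform p q"
  by (auto simp: Aform_def fzero_def)
lemma Aform_neg: "p < 0 \<or> q < 0 \<Longrightarrow> \<alpha> \<in> Aform p q \<Longrightarrow> \<alpha> = fzero"
  by (rule ext) (force simp: Aform_def fzero_def)

lemma del_fadd: "del dg (fadd \<alpha> \<beta>) = fadd (del dg \<alpha>) (del dg \<beta>)" by (simp add: del_opc opc_fadd)
lemma dbar_fadd: "dbar dg (fadd \<alpha> \<beta>) = fadd (dbar dg \<alpha>) (dbar dg \<beta>)" by (simp add: dbar_opc opc_fadd)
lemma del_fscale: "del dg (fscale c \<alpha>) = fscale c (del dg \<alpha>)" by (simp add: del_opc opc_fscale)
lemma dbar_fscale: "dbar dg (fscale c \<alpha>) = fscale c (dbar dg \<alpha>)" by (simp add: dbar_opc opc_fscale)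
lemma del_fzero: "del dg fzero = fzero" by (simp add: del_opc opc_fzero)
lemma dbar_fzero: "dbar dg fzero = fzero" by (simp add: dbar_opc opc_fzero)

definition W2 :: "(nat \<Rightarrow> form) \<Rightarrow> form \<Rightarrow> form \<Rightarrow> bool" where
  "W2 dg \<alpha> x1 \<longleftrightarrow> \<alpha> \<in> Aform 0 2 \<and> x1 \<in> Aform 1 1 \<and> dbar dg \<alpha> = fzero \<and> fadd (del dg \<alpha>) (dbar dg x1) = fzero"
definition W3 :: "(nat \<Rightarrow> form) \<Rightarrow> form \<Rightarrow> form \<Rightarrow> form \<Rightarrow> bool" where
  "W3 dg \<alpha> x1 x2 \<longleftrightarrow> W2 dg \<alpha> x1 \<and> x2 \<in> Aform 2 0 \<and> fadd (del dg x1) (dbar dg x2) = fzero"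
definition Wi :: "(nat \<Rightarrow> form) \<Rightarrow> form \<Rightarrow> form \<Rightarrow> form \<Rightarrow> bool" where
  "Wi dg \<alpha> x1 x2 \<longleftrightarrow> W3 dg \<alpha> x1 x2 \<and> del dg x2 = fzero"

lemma fadd_eq0: "fadd A B = fzero \<Longrightarrow> fadd C D = fzero \<Longrightarrow> fadd (fadd A C) (fadd B D) = fzero"
proof -
  assume "fadd A B = fzero" "fadd C D = fzero"
  then have "\<And>U. A U + B U = 0" "\<And>U. C U + D U = 0" by (auto simp: fadd_def fzero_def fun_eq_iff)
  then have "\<And>U. (A U + C U) + (B U + D U) = 0" by (metis add.assoc add.commute add_0)
  then show ?thesis by (simp add: fadd_def fzero_def fun_eq_iff)
qed
lemma fadd_eq0': "A = fzero \<Longrightarrow> C = fzero \<Longrightarrow> fadd A C = fzero"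
  by (auto simp: fadd_def fzero_def fun_eq_iff)
lemma fscale_eq0: "fadd A B = fzero \<Longrightarrow> fadd (fscale c A) (fscale c B) = fzero"
proof -
  assume "fadd A B = fzero"
  then have "\<And>U. A U + B U = 0" by (auto simp: fadd_def fzero_def fun_eq_iff)
  then have "\<And>U. c * A U + c * B U = 0" by (metis distrib_left mult_zero_right)
  then show ?thesis by (simp add: fadd_def fscale_def fzero_def fun_eq_iff)
qed

lemma W2_add: "W2 dg \<alpha> x \<Longrightarrow> W2 dg \<beta> y \<Longrightarrow> W2 dg (fadd \<alpha> \<beta>) (fadd x y)"
  unfolding W2_def by (simp add: Aform_fadd del_fadd dbar_fadd fadd_eq0 fadd_eq0')
lemma W2_scale: "W2 dg \<alpha> x \<Longrightarrow> W2 dg (fscale c \<alpha>) (fscale c x)"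
  unfolding W2_def by (simp add: Aform_fscale del_fscale dbar_fscale fscale_eq0 fscale_fzero)
lemma W3_add: "W3 dg \<alpha> x x' \<Longrightarrow> W3 dg \<beta> y y' \<Longrightarrow> W3 dg (fadd \<alpha> \<beta>) (fadd x y) (fadd x' y')"
  unfolding W3_def by (simp add: W2_add Aform_fadd del_fadd dbar_fadd fadd_eq0)
lemma W3_scale: "W3 dg \<alpha> x x' \<Longrightarrow> W3 dg (fscale c \<alpha>) (fscale c x) (fscale c x')"
  unfolding W3_def by (simp add: W2_scale Aform_fscale del_fscale dbar_fscale fscale_eq0)
lemma Wi_add: "Wi dg \<alpha> x x' \<Longrightarrow> Wi dg \<beta> y y' \<Longrightarrow> Wi dg (fadd \<alpha> \<beta>) (fadd x y) (fadd x' y')"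
  unfolding Wi_def by (simp add: W3_add del_fadd fadd_eq0')
lemma Wi_scale: "Wi dg \<alpha> x x' \<Longrightarrow> Wi dg (fscale c \<alpha>) (fscale c x) (fscale c x')"
  unfolding Wi_def by (simp add: W3_scale del_fscale fscale_fzero)
lemma Wi_W3: "Wi dg \<alpha> x x' \<Longrightarrow> W3 dg \<alpha> x x'" by (simp add: Wi_def)
lemma W3_W2: "W3 dg \<alpha> x x' \<Longrightarrow> W2 dg \<alpha> x" by (simp add: W3_def)

lemma Zr1: "Zr dg (Suc 0) 0 2 = {\<alpha> \<in> Aform 0 2. dbar dg \<alpha> = fzero}"
  by (auto simp: Zr_def)

lemma Zr2: "\<alpha> \<in> Zr dg 2 0 2 \<longleftrightarrow> (\<exists>x1. W2 dg \<alpha> x1)"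
proof
  assume "\<alpha> \<in> Zr dg 2 0 2"
  then obtain xs where "\<alpha> \<in> Aform 0 2" "dbar dg \<alpha> = fzero" "length xs = 1"
    "xs ! 0 \<in> Aform 1 1" "fadd (del dg \<alpha>) (dbar dg (xs ! 0)) = fzero"
    unfolding Zr_def by fastforce
  then show "\<exists>x1. W2 dg \<alpha> x1" unfolding W2_def by blast
next
  assume "\<exists>x1. W2 dg \<alpha> x1"
  then obtain x1 where "W2 dg \<alpha> x1" by blast
  then show "\<alpha> \<in> Zr dg 2 0 2" unfolding Zr_def W2_def by (intro CollectI conjI exI[of _ "[x1]"]) auto
qed

lemma Zr3: "\<alpha> \<in> Zr dg 3 0 2 \<longleftrightarrow> (\<exists>x1 x2. W3 dg \<alpha> x1 x2)"
proof
  assume "\<alpha> \<in> Zr dg 3 0 2"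
  then obtain xs where h: "\<alpha> \<in> Aform 0 2" "dbar dg \<alpha> = fzero" "length xs = 2"
    "\<forall>i<2. xs ! i \<in> Aform (0 + int i + 1) (2 - int i - 1)"
    "\<forall>i<2. fadd (del dg ((\<alpha> # xs) ! i)) (dbar dg (xs ! i)) = fzero"
    unfolding Zr_def by auto
  have "xs ! 0 \<in> Aform 1 1" "xs ! 1 \<in> Aform 2 0" using h(4)[rule_format, of 0] h(4)[rule_format, of 1] by auto
  moreover have "fadd (del dg \<alpha>) (dbar dg (xs ! 0)) = fzero" "fadd (del dg (xs ! 0)) (dbar dg (xs ! 1)) = fzero"
    using h(5)[rule_format, of 0] h(5)[rule_format, of 1] by auto
  ultimately show "\<exists>x1 x2. W3 dg \<alpha> x1 x2" using h unfolding W3_def W2_def by blast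
next
  assume "\<exists>x1 x2. W3 dg \<alpha> x1 x2"
  then obtain x1 x2 where w: "W3 dg \<alpha> x1 x2" by blast
  have "\<forall>i<2. [x1, x2] ! i \<in> Aform (0 + int i + 1) (2 - int i - 1)"
    using w by (auto simp: W3_def W2_def less_2_cases_iff)
  moreover have "\<forall>i<2. fadd (del dg ((\<alpha> # [x1, x2]) ! i)) (dbar dg ([x1, x2] ! i)) = fzero"
    using w by (auto simp: W3_def W2_def less_2_cases_iff)
  ultimately show "\<alpha> \<in> Zr dg 3 0 2" using w unfolding Zr_def W3_def W2_def
    by (intro CollectI conjI exI[of _ "[x1, x2]"]) auto
qed

lemma Zr_ge3_sub: assumes "r \<ge> 3" "\<alpha> \<in> Zr dg r 0 2" shows "\<alpha> \<in> Zr dg 3 0 2"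
proof -
  obtain xs where h: "\<alpha> \<in> Aform 0 2" "dbar dg \<alpha> = fzero" "length xs = r - 1"
    "\<forall>i<r-1. xs ! i \<in> Aform (0 + int i + 1) (2 - int i - 1)"
    "\<forall>i<r-1. fadd (del dg ((\<alpha> # xs) ! i)) (dbar dg (xs ! i)) = fzero"
    using assms(2) unfolding Zr_def by auto
  show ?thesis unfolding Zr_def
  proof (intro CollectI conjI exI[of _ "take 2 xs"])
    show "length (take 2 xs) = 3 - 1" using h(3) assms(1) by simp
    show "\<forall>i<3 - 1. take 2 xs ! i \<in> Aform (0 + int i + 1) (2 - int i - 1)"
      using h(4) assms(1) by auto
    show "\<forall>i<3 - 1. fadd (del dg ((\<alpha> # take 2 xs) ! i)) (dbar dg (take 2 xs ! i)) = fzero"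
    proof (intro allI impI)
      fix i :: nat assume i: "i < 3 - 1"
      have "(\<alpha> # take 2 xs) ! i = (\<alpha> # xs) ! i" using i by (cases i) auto
      then show "fadd (del dg ((\<alpha> # take 2 xs) ! i)) (dbar dg (take 2 xs ! i)) = fzero"
        using h(5) i assms(1) by auto
    qed
  qed (use h in auto)
qed

lemma Zr_ge3_in: assumes "r \<ge> 3" "Wi dg \<alpha> x1 x2" shows "\<alpha> \<in> Zr dg r 0 2"
proof -
  define xs where "xs = [x1, x2] @ replicate (r - 3) fzero"
  have len: "length xs = r - 1" using assms(1) by (simp add: xs_def)
  have w: "\<alpha> \<in> Aform 0 2" "x1 \<in> Aform 1 1" "x2 \<in> Aform 2 0" "dbar dg \<alpha> = fzero"
     "fadd (del dg \<alpha>) (dbar dg x1) = fzero" "fadd (del dg x1) (dbar dg x2) = fzero" "del dg x2 = fzero"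
    using assms(2) by (auto simp: Wi_def W3_def W2_def)
  have xi: "xs ! i = (if i = 0 then x1 else if i = 1 then x2 else fzero)" if "i < r - 1" for i
    using that assms(1) by (auto simp: xs_def nth_append less_2_cases_iff)
  show ?thesis unfolding Zr_def
  proof (intro CollectI conjI exI[of _ xs] w len allI impI)
    fix i assume i: "i < r - 1"
    show "xs ! i \<in> Aform (0 + int i + 1) (2 - int i - 1)"
      using xi[OF i] w Aform_fzero by auto
    show "fadd (del dg ((\<alpha> # xs) ! i)) (dbar dg (xs ! i)) = fzero"
    proof (cases "i \<le> 2")
      case True
      then consider "i = 0" | "i = 1" | "i = 2" by linarith
      then show ?thesis
      proof cases
        case 3
        then have "(\<alpha> # xs) ! i = x2" using xi[of 1] i by simp
        then show ?thesis using xi[OF i] w 3 by (simp add: dbar_fzero fadd_fzero_right)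
      qed (use xi[OF i] xi[of 0] i w in auto)
    next
      case False
      then have "(\<alpha> # xs) ! i = fzero" using xi[of "i - 1"] i by (cases i) auto
      then show ?thesis using xi[OF i] False by (simp add: dbar_fzero del_fzero fadd_fzero_right)
    qed
  qed
qed

lemma Br_eq: assumes "r \<ge> 1" shows "Br dg r 0 2 = {dbar dg \<gamma> | \<gamma>. \<gamma> \<in> Aform 0 1}"
proof (intro set_eqI iffI)
  fix \<beta> assume "\<beta> \<in> Br dg r 0 2"
  then obtain \<gamma> bs where h: "\<beta> = fadd (if r \<ge> 2 then del dg (hd bs) else fzero) (dbar dg \<gamma>)"
    "\<gamma> \<in> Aform 0 (2 - 1)" "length bs = r - 1" "\<forall>i<r-1. bs ! i \<in> Aform (0 - 1 - int i) (2 + int i)"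
    unfolding Br_def by blast
  have "(if r \<ge> 2 then del dg (hd bs) else fzero) = fzero"
  proof (cases "r \<ge> 2")
    case True
    then have "bs ! 0 \<in> Aform (0 - 1 - int 0) (2 + int 0)" using h(4)[rule_format, of 0] by simp
    then have "bs ! 0 = fzero" by (intro Aform_neg) auto
    moreover have "hd bs = bs ! 0" using h(3) True by (cases bs) auto
    ultimately show ?thesis using True by (simp add: del_fzero)
  qed simp
  then show "\<beta> \<in> {dbar dg \<gamma> | \<gamma>. \<gamma> \<in> Aform 0 1}" using h by (auto simp: fadd_fzero_left)
next
  fix \<beta> assume "\<beta> \<in> {dbar dg \<gamma> | \<gamma>. \<gamma> \<in> Aform 0 1}"
  then obtain \<gamma> where g: "\<beta> = dbar dg \<gamma>" "\<gamma> \<in> Aform 0 1" by blast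
  show "\<beta> \<in> Br dg r 0 2" unfolding Br_def
  proof (intro CollectI exI conjI)
    show "\<beta> = fadd (if r \<ge> 2 then del dg (hd (replicate (r - 1) fzero)) else fzero) (dbar dg \<gamma>)"
      using g assms by (cases r) (auto simp: del_fzero fadd_fzero_left)
  qed (use g assms in \<open>auto simp: Aform_fzero dbar_fzero del_fzero fadd_fzero_left\<close>)
qed

lemma KEYS01: "KEYS 0 1 = [[4],[5],[6],[7]]"
  by (simp add: KEYS_def numeral_eq_Suc)
lemma KEYS11: "KEYS 1 1 = [[0, 4], [1, 4], [2, 4], [3, 4], [0, 5], [1, 5], [2, 5], [3, 5], [0, 6], [1, 6], [2, 6], [3, 6], [0, 7], [1, 7], [2, 7], [3, 7]]"
  by (simp add: KEYS_def numeral_eq_Suc)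
lemma KEYS20: "KEYS 2 0 = [[0, 1], [0, 2], [1, 2], [0, 3], [1, 3], [2, 3]]"
  by (simp add: KEYS_def numeral_eq_Suc)


lemma Aform_lc: "\<forall>x\<in>set L. list_all (\<lambda>i. i < 8) (snd x) \<and> distinct (snd x) \<and>
     int (length (filter (\<lambda>i. i < 4) (snd x))) = p \<and> int (length (filter (\<lambda>i. 4 \<le> i \<and> i < 8) (snd x))) = q
   \<Longrightarrow> lc L \<in> Aform p q"
proof (induction L)
  case Nil then show ?case by (simp add: Aform_fzero)
next
  case (Cons x L)
  have "fscale (fst x) (mono (sset (snd x))) \<in> Aform p q"
    using Cons.prems nunb_sset[of "snd x"] nbar_sset[of "snd x"]
    by (auto simp: Aform_def fscale_def mono_def list_all_iff sset_def)
  then show ?case using Cons by (simp only: lc.simps Aform_fadd list.set_intros) (simp add: Aform_fadd)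
qed

lemma ii: "\<i> * \<i> = -1" by simp

lemma V12: "Wi (\<lambda>j. lc (DX \<delta> \<nu> a b j)) (lc [(1,[4,5])]) (lc []) (lc [])"
  unfolding Wi_def W3_def W2_def
  apply (simp add: comp_simps fadd_lc Aform_lc del: lc.simps)
  apply ((intro conjI)?; rule lc_zero; simp add: wfk_def coeffat_def)
  done
lemma V14: "Wi (\<lambda>j. lc (DX \<delta> \<nu> a b j)) (lc [(1,[4,7])]) (lc [(-1,[3,4])]) (lc [])"
  unfolding Wi_def W3_def W2_def
  apply (simp add: comp_simps fadd_lc Aform_lc del: lc.simps)
  apply ((intro conjI)?; rule lc_zero; simp add: wfk_def coeffat_def)
  done
lemma V24: "Wi (\<lambda>j. lc (DX \<delta> \<nu> a b j)) (lc [(1,[5,7])]) (lc [(-1,[3,5]),(1,[1,7]),(2*\<i>*complex_of_real \<nu>,[1,5])]) (lc [(1,[1,3])])"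
  unfolding Wi_def W3_def W2_def
  apply (simp add: comp_simps fadd_lc Aform_lc del: lc.simps)
  apply ((intro conjI)?; rule lc_zero; simp add: wfk_def coeffat_def)
  done

lemma V34b: 
  fixes P Ai Bi Y :: complex and \<delta> \<nu> a b :: real
  assumes dd: "complex_of_real \<delta> * complex_of_real \<delta> = 1" 
   and hP: "2 * \<i> * complex_of_real \<delta> * complex_of_real a * complex_of_real b * P = complex_of_real a * complex_of_real a + complex_of_real b * complex_of_real b - 2 * complex_of_real \<delta> * complex_of_real \<nu> * complex_of_real b"
   and hA: "complex_of_real a * Ai = 1" and hB: "complex_of_real b * Bi = 1"
   and hY: "complex_of_real b * Y = - complex_of_real a * (complex_of_real a*P + \<i>*complex_of_real \<delta>*complex_of_real b)"
   and hT: "(complex_of_real a * complex_of_real a + complex_of_real b * complex_of_real b - 2 * complex_of_real \<delta> * complex_of_real \<nu> * complex_of_real b)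
          * (complex_of_real a * complex_of_real a + complex_of_real b * complex_of_real b - 2 * complex_of_real \<delta> * complex_of_real \<nu> * complex_of_real b)
          = 4 * complex_of_real a * complex_of_real a * complex_of_real b * complex_of_real b"
  shows "W3 (\<lambda>j. lc (DX \<delta> \<nu> a b j)) (lc [(1,[6,7])])
     (lc [(-1,[3,6]), (P,[2,7]), (\<i>*complex_of_real \<delta>*complex_of_real b*P - complex_of_real a,[2,5]), 
        (complex_of_real a*P + \<i>*complex_of_real \<delta>*complex_of_real b,[1,6]), 
        (-\<i>*complex_of_real \<delta>*complex_of_real a*P + complex_of_real b - 2*complex_of_real \<delta>*complex_of_real \<nu>, [3,4])])
     (lc [(P,[2,3]), (Y, [0,3])])"
  unfolding W3_def W2_def
  apply (simp add: comp_simps fadd_lc Aform_lc del: lc.simps)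
  apply ((intro conjI)?; rule lc_zero; simp add: wfk_def coeffat_def)
  apply (intro conjI)
  using ii dd hP hA hB hT hY apply algebra+
  done
lemma at0: "F = fzero \<Longrightarrow> F U = 0" by (simp add: fzero_def)

lemma noZ3:
  fixes \<delta> \<nu> a b :: real
  assumes dd: "complex_of_real \<delta> * complex_of_real \<delta> = 1"
   and hA: "complex_of_real a * Ai = 1" and hB: "complex_of_real b * Bi = 1"
   and hd0: "\<delta> \<noteq> 0"
   and W: "W3 (\<lambda>j. lc (DX \<delta> \<nu> a b j)) \<alpha> x1 x2"
   and hT: "(complex_of_real a * complex_of_real a + complex_of_real b * complex_of_real b - 2 * complex_of_real \<delta> * complex_of_real \<nu> * complex_of_real b)
          * (complex_of_real a * complex_of_real a + complex_of_real b * complex_of_real b - 2 * complex_of_real \<delta> * complex_of_real \<nu> * complex_of_real b)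
          - 4 * complex_of_real a * complex_of_real a * complex_of_real b * complex_of_real b \<noteq> 0"
  shows "\<alpha> (sset [6,7]) = 0"
proof -
  define ca where "ca = (\<lambda>k. \<alpha> (sset k))"
  define cx where "cx = (\<lambda>k. x1 (sset k))"
  define cy where "cy = (\<lambda>k. x2 (sset k))"
  have w: "\<alpha> \<in> Aform 0 2" "x1 \<in> Aform 1 1" "x2 \<in> Aform 2 0" "dbar (\<lambda>j. lc (DX \<delta> \<nu> a b j)) \<alpha> = fzero"
     "fadd (del (\<lambda>j. lc (DX \<delta> \<nu> a b j)) \<alpha>) (dbar (\<lambda>j. lc (DX \<delta> \<nu> a b j)) x1) = fzero"
     "fadd (del (\<lambda>j. lc (DX \<delta> \<nu> a b j)) x1) (dbar (\<lambda>j. lc (DX \<delta> \<nu> a b j)) x2) = fzero"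
    using W by (auto simp: W3_def W2_def)
  have ra: "\<alpha> = lc (map (\<lambda>k. (ca k, k)) (KEYS 0 2))" unfolding ca_def by (rule Aform_rep[OF w(1)])
  have rx: "x1 = lc (map (\<lambda>k. (cx k, k)) (KEYS 1 1))" unfolding cx_def by (rule Aform_rep[OF w(2)])
  have ry: "x2 = lc (map (\<lambda>k. (cy k, k)) (KEYS 2 0))" unfolding cy_def by (rule Aform_rep[OF w(3)])
  note e0 = w(4)[unfolded ra]
  note e1 = w(5)[unfolded ra rx]
  note e2 = w(6)[unfolded rx ry]
  have "ca [6,7] * ((complex_of_real a * complex_of_real a + complex_of_real b * complex_of_real b - 2 * complex_of_real \<delta> * complex_of_real \<nu> * complex_of_real b)
          * (complex_of_real a * complex_of_real a + complex_of_real b * complex_of_real b - 2 * complex_of_real \<delta> * complex_of_real \<nu> * complex_of_real b)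
          - 4 * complex_of_real a * complex_of_real a * complex_of_real b * complex_of_real b) = 0"
    using at0[OF e0, of "sset [4,5,7]"]
      at0[OF e1, of "sset [1,5,6]"] at0[OF e1, of "sset [0,5,7]"] at0[OF e1, of "sset [1,4,7]"]
      at0[OF e1, of "sset [0,4,6]"] at0[OF e1, of "sset [1,4,5]"]
      at0[OF e2, of "sset [0,1,5]"] at0[OF e2, of "sset [0,2,4]"] at0[OF e2, of "sset [0,1,7]"] at0[OF e2, of "sset [0,2,6]"]
    apply (simp add: KEYS02 KEYS11 KEYS20 comp_simps fadd_def lc_at wfk_def coeffat_def hd0 del: lc.simps mult_eq_0_iff mult_cancel_left mult_cancel_right)
    using ii dd hA hB apply algebra
    done
  then show ?thesis using hT by (simp add: ca_def)
qed

lemma V13: "Wi (\<lambda>j. lc (DX \<delta> \<nu> a b j)) (lc [(1,[4,6])]) (lc [(complex_of_real a,[1,5])]) (lc [(-1,[0,2])])"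
  unfolding Wi_def W3_def W2_def
  apply (simp add: comp_simps fadd_lc Aform_lc del: lc.simps)
  apply ((intro conjI)?; rule lc_zero; simp add: wfk_def coeffat_def)
  done

lemma V34: 
  fixes P :: complex and \<delta> \<nu> a b :: real
  assumes dd: "complex_of_real \<delta> * complex_of_real \<delta> = 1" 
   and hP: "2 * \<i> * complex_of_real \<delta> * complex_of_real a * complex_of_real b * P = complex_of_real a * complex_of_real a + complex_of_real b * complex_of_real b - 2 * complex_of_real \<delta> * complex_of_real \<nu> * complex_of_real b"
  shows "W2 (\<lambda>j. lc (DX \<delta> \<nu> a b j)) (lc [(1,[6,7])])
     (lc [(-1,[3,6]), (P,[2,7]), (\<i>*complex_of_real \<delta>*complex_of_real b*P - complex_of_real a,[2,5]), 
        (complex_of_real a*P + \<i>*complex_of_real \<delta>*complex_of_real b,[1,6]), 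
        (-\<i>*complex_of_real \<delta>*complex_of_real a*P + complex_of_real b - 2*complex_of_real \<delta>*complex_of_real \<nu>, [3,4])])"
  unfolding W2_def
  apply (simp add: comp_simps fadd_lc Aform_lc del: lc.simps)
  apply (intro conjI; rule lc_zero; simp add: wfk_def coeffat_def)
  apply (intro conjI)
  using ii dd hP apply algebra+
  done

lemma ker_dec:
  assumes "\<alpha> \<in> Aform 0 2" "dbar (\<lambda>j. lc (DX \<delta> \<nu> a b j)) \<alpha> = fzero"
  shows "\<alpha> = lc [(\<alpha> (sset [4,5]), [4,5]), (\<alpha> (sset [4,6]), [4,6]), (\<alpha> (sset [4,7]), [4,7]), (\<alpha> (sset [5,7]), [5,7]), (\<alpha> (sset [6,7]), [6,7])]"
proof -
  define ca where "ca = (\<lambda>k. \<alpha> (sset k))"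
  have ra: "\<alpha> = lc (map (\<lambda>k. (ca k, k)) (KEYS 0 2))" unfolding ca_def by (rule Aform_rep[OF assms(1)])
  note e0 = assms(2)[unfolded ra]
  have c56: "ca [5,6] = 0" using at0[OF e0, of "sset [4,5,7]"]
    by (simp add: KEYS02 comp_simps lc_at wfk_def coeffat_def del: lc.simps)
  have "lc (map (\<lambda>k. (ca k, k)) (KEYS 0 2)) = lc [(ca [4,5], [4,5]), (ca [4,6], [4,6]), (ca [4,7], [4,7]), (ca [5,7], [5,7]), (ca [6,7], [6,7])]"
    by (rule lc_eq) (simp_all add: KEYS02 wfk_def coeffat_def c56)
  with ra have "\<alpha> = lc [(ca [4,5], [4,5]), (ca [4,6], [4,6]), (ca [4,7], [4,7]), (ca [5,7], [5,7]), (ca [6,7], [6,7])]"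
    by (rule trans)
  then show ?thesis by (simp only: ca_def)
qed

lemma W2_nil: "W2 dg (lc []) fzero"
  by (simp add: W2_def Aform_fzero dbar_fzero del_fzero fadd_fzero_left)
lemma W3_nil: "W3 dg (lc []) fzero fzero"
  by (simp add: W3_def W2_nil[simplified] Aform_fzero dbar_fzero del_fzero fadd_fzero_left)
lemma Wi_nil: "Wi dg (lc []) fzero fzero"
  by (simp add: Wi_def W3_nil[simplified] del_fzero)
lemma lc_cons1: "lc ((c, k) # L) = fadd (fscale c (lc [(1, k)])) (lc L)"
  by (simp add: fscale_def fadd_def fzero_def fun_eq_iff)
lemma W2_cons: "W2 dg (lc [(1,k)]) x \<Longrightarrow> W2 dg (lc L) y \<Longrightarrow> W2 dg (lc ((c,k) # L)) (fadd (fscale c x) y)"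
  by (subst lc_cons1) (intro W2_add W2_scale)
lemma W3_cons: "W3 dg (lc [(1,k)]) x x' \<Longrightarrow> W3 dg (lc L) y y' \<Longrightarrow> W3 dg (lc ((c,k) # L)) (fadd (fscale c x) y) (fadd (fscale c x') y')"
  by (subst lc_cons1) (intro W3_add W3_scale)

lemma lincomb_cons: "lincomb (c # cs) (v # vs) = fadd (fscale c v) (lincomb cs vs)"
  by (simp add: lincomb_def fadd_def fscale_def fun_eq_iff lessThan_Suc_eq_insert_0 sum.reindex)
lemma lincomb_nil: "lincomb [] [] = fzero"
  by (simp add: lincomb_def fzero_def)

lemma w2_eq: "j < k \<Longrightarrow> w2 j k = lc [(1, [j,k])]"
  by (simp add: w2_lc sset_disj wsign_simp del: lc.simps)



lemma dbar6: "dbar (\<lambda>j. lc (DX \<delta> \<nu> a b j)) (lc [(c,[6])]) = lc [(c,[4,7])]"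
  by (simp add: comp_simps del: lc.simps)

lemma span_eq: "lc [(c45,[4,5]),(c46,[4,6]),(c47,[4,7]),(c57,[5,7]),(c67,[6,7])] =
   fadd (lincomb [c45,c46,c57,c67] [w2 4 5, w2 4 6, w2 5 7, w2 6 7]) (dbar (\<lambda>j. lc (DX \<delta> \<nu> a b j)) (lc [(c47,[6])]))"
  apply (simp only: lincomb_cons lincomb_nil w2_eq dbar6 fscale_lc fadd_lc fzero_lc)
  apply (rule lc_eq; simp add: wfk_def coeffat_def scl_def)
  done

lemma span_eq3: "lc [(c45,[4,5]),(c46,[4,6]),(c47,[4,7]),(c57,[5,7]),(0,[6,7])] =
   fadd (lincomb [c45,c46,c57] [w2 4 5, w2 4 6, w2 5 7]) (dbar (\<lambda>j. lc (DX \<delta> \<nu> a b j)) (lc [(c47,[6])]))"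
  apply (simp only: lincomb_cons lincomb_nil w2_eq dbar6 fscale_lc fadd_lc fzero_lc)
  apply (rule lc_eq; simp add: wfk_def coeffat_def scl_def)
  done

theorem proposition2p4:
  fixes \<epsilon> \<delta> \<nu> a b :: real
  assumes "\<epsilon> = 1" and "\<delta> = 1 \<or> \<delta> = -1" and "\<nu> = 0 \<or> \<nu> = 1" and "a > 0" and "b \<noteq> 0"
  shows "let dg = struct_eq \<epsilon> \<delta> \<nu> a b;
             \<Theta> = ((a - b)^2 - 2 * \<delta> * \<nu> * b) * ((a + b)^2 - 2 * \<delta> * \<nu> * b)
         in Epage_eq dg 1 2 0 2 \<and>
            Epage_spanned dg 1 0 2 [w2 4 5, w2 4 6, w2 5 7, w2 6 7] \<and>
            Epage_spanned dg 2 0 2 [w2 4 5, w2 4 6, w2 5 7, w2 6 7] \<and>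
            (\<not> Epage_eq dg 2 3 0 2 \<longleftrightarrow> \<Theta> \<noteq> 0) \<and>
            (\<Theta> \<noteq> 0 \<longrightarrow> (\<forall>r\<ge>3. Epage_spanned dg r 0 2 [w2 4 5, w2 4 6, w2 5 7]))"
proof -
  define G where "G = (\<lambda>j. lc (DX \<delta> \<nu> a b j))"
  have dgG: "struct_eq \<epsilon> \<delta> \<nu> a b = G" using assms(1) struct_DX by (simp add: G_def)
  define \<Theta> where "\<Theta> = ((a - b)^2 - 2 * \<delta> * \<nu> * b) * ((a + b)^2 - 2 * \<delta> * \<nu> * b)"
  have dd: "complex_of_real \<delta> * complex_of_real \<delta> = 1" using assms(2) by auto
  have hd0: "\<delta> \<noteq> 0" using assms(2) by auto
  have Anz: "complex_of_real a \<noteq> 0" using assms(4) by simp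
  have Bnz: "complex_of_real b \<noteq> 0" using assms(5) by simp
  have dnz: "complex_of_real \<delta> \<noteq> 0" using hd0 by simp
  define K where "K = complex_of_real a * complex_of_real a + complex_of_real b * complex_of_real b - 2 * complex_of_real \<delta> * complex_of_real \<nu> * complex_of_real b"
  define P where "P = K / (2 * \<i> * complex_of_real \<delta> * complex_of_real a * complex_of_real b)"
  have hP: "2 * \<i> * complex_of_real \<delta> * complex_of_real a * complex_of_real b * P = complex_of_real a * complex_of_real a + complex_of_real b * complex_of_real b - 2 * complex_of_real \<delta> * complex_of_real \<nu> * complex_of_real b"
    using Anz Bnz dnz by (simp add: P_def K_def)
  define Y where "Y = - complex_of_real a * (complex_of_real a*P + \<i>*complex_of_real \<delta>*complex_of_real b) / complex_of_real b"
  have hY: "complex_of_real b * Y = - complex_of_real a * (complex_of_real a*P + \<i>*complex_of_real \<delta>*complex_of_real b)"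
    using Bnz by (simp add: Y_def)
  have hA: "complex_of_real a * inverse (complex_of_real a) = 1" using Anz by simp
  have hB: "complex_of_real b * inverse (complex_of_real b) = 1" using Bnz by simp
  have ThC: "complex_of_real \<Theta> = K * K - 4 * complex_of_real a * complex_of_real a * complex_of_real b * complex_of_real b"
    unfolding \<Theta>_def K_def by (simp add: power2_eq_square) algebra

  have w45: "Wi G (lc [(1,[4,5])]) (lc []) (lc [])" unfolding G_def by (rule V12)
  have w46: "Wi G (lc [(1,[4,6])]) (lc [(complex_of_real a,[1,5])]) (lc [(-1,[0,2])])" unfolding G_def by (rule V13)
  have w47: "Wi G (lc [(1,[4,7])]) (lc [(-1,[3,4])]) (lc [])" unfolding G_def by (rule V14)
  have w57: "Wi G (lc [(1,[5,7])]) (lc [(-1,[3,5]),(1,[1,7]),(2*\<i>*complex_of_real \<nu>,[1,5])]) (lc [(1,[1,3])])"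
    unfolding G_def by (rule V24)
  obtain X67 where w67: "W2 G (lc [(1,[6,7])]) X67" unfolding G_def using V34[OF dd hP] by blast
  define KER where "KER = {\<alpha> \<in> Aform 0 2. dbar G \<alpha> = fzero}"
  have Z1: "Zr G 1 0 2 = KER" using Zr1[of G] by (simp add: KER_def)
  have dec: "\<alpha> = lc [(\<alpha> (sset [4,5]), [4,5]), (\<alpha> (sset [4,6]), [4,6]), (\<alpha> (sset [4,7]), [4,7]), (\<alpha> (sset [5,7]), [5,7]), (\<alpha> (sset [6,7]), [6,7])]"
    if "\<alpha> \<in> KER" for \<alpha> using that unfolding KER_def G_def by (intro ker_dec) auto
  have KZ2: "\<exists>x1. W2 G \<alpha> x1" if "\<alpha> \<in> KER" for \<alpha>
    using dec[OF that] W2_cons[OF W3_W2[OF Wi_W3[OF w45]] W2_cons[OF W3_W2[OF Wi_W3[OF w46]] W2_cons[OF W3_W2[OF Wi_W3[OF w47]]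
       W2_cons[OF W3_W2[OF Wi_W3[OF w57]] W2_cons[OF w67 W2_nil]]]]] by metis
  have Z2: "Zr G 2 0 2 = KER"
  proof (intro set_eqI iffI)
    fix \<alpha> assume "\<alpha> \<in> Zr G 2 0 2" then show "\<alpha> \<in> KER" by (auto simp: Zr2 W2_def KER_def)
  next
    fix \<alpha> assume "\<alpha> \<in> KER" then show "\<alpha> \<in> Zr G 2 0 2" using KZ2 by (simp add: Zr2)
  qed
  define BR where "BR = {dbar G \<gamma> | \<gamma>. \<gamma> \<in> Aform 0 1}"
  have BRr: "Br G r 0 2 = BR" if "r \<ge> 1" for r using Br_eq[OF that] by (simp add: BR_def)
  have E12: "Epage_eq G 1 2 0 2" unfolding Epage_eq_def using Z1 Z2 BRr[of 1] BRr[of 2] by simp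
  have inBR: "dbar G (lc [(c,[6])]) \<in> BR" for c
    unfolding BR_def by (rule CollectI, rule exI[of _ "lc [(c,[6])]"]) (simp add: Aform_lc del: lc.simps)
  have vK: "lc [(1,[j,k])] \<in> KER" if "W2 G (lc [(1,[j,k])]) x" for j k x using that by (simp add: W2_def KER_def)
  have S1: "Epage_spanned G 1 0 2 [w2 4 5, w2 4 6, w2 5 7, w2 6 7]"
    unfolding Epage_spanned_def Z1 BRr[OF order_refl]
  proof (intro conjI ballI)
    show "set [w2 4 5, w2 4 6, w2 5 7, w2 6 7] \<subseteq> KER"
      using vK[OF W3_W2[OF Wi_W3[OF w45]]] vK[OF W3_W2[OF Wi_W3[OF w46]]] vK[OF W3_W2[OF Wi_W3[OF w57]]] vK[OF w67]
      by (simp add: w2_eq del: lc.simps)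
  next
    fix \<alpha> assume a: "\<alpha> \<in> KER"
    show "\<exists>cs \<beta>. length cs = length [w2 4 5, w2 4 6, w2 5 7, w2 6 7] \<and> \<beta> \<in> BR \<and> \<alpha> = fadd (lincomb cs [w2 4 5, w2 4 6, w2 5 7, w2 6 7]) \<beta>"
    proof (intro exI conjI)
      show "length [\<alpha> (sset [4,5]), \<alpha> (sset [4,6]), \<alpha> (sset [5,7]), \<alpha> (sset [6,7])] = length [w2 4 5, w2 4 6, w2 5 7, w2 6 7]" by simp
      show "dbar G (lc [(\<alpha> (sset [4,7]),[6])]) \<in> BR" by (rule inBR)
      show "\<alpha> = fadd (lincomb [\<alpha> (sset [4,5]), \<alpha> (sset [4,6]), \<alpha> (sset [5,7]), \<alpha> (sset [6,7])] [w2 4 5, w2 4 6, w2 5 7, w2 6 7])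
         (dbar G (lc [(\<alpha> (sset [4,7]),[6])]))"
        using dec[OF a] span_eq unfolding G_def by (rule trans)
    qed
  qed

  have B1: "Br G 1 0 2 = BR" and B2: "Br G 2 0 2 = BR" and B3: "Br G 3 0 2 = BR" using BRr by auto
  have S2: "Epage_spanned G 2 0 2 [w2 4 5, w2 4 6, w2 5 7, w2 6 7]"
    using S1 unfolding Epage_spanned_def Z1 Z2 B1 B2 .
  have hTc: "K * K - 4 * complex_of_real a * complex_of_real a * complex_of_real b * complex_of_real b \<noteq> 0" if "\<Theta> \<noteq> 0"
    using that ThC by (metis of_real_eq_0_iff)
  have notZ3: "\<alpha> (sset [6,7]) = 0" if "\<Theta> \<noteq> 0" "W3 G \<alpha> x1 x2" for \<alpha> x1 x2
    using noZ3[OF dd hA hB hd0 that(2)[unfolded G_def]] hTc[OF that(1)] unfolding K_def by blast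
  have v67at: "lc [(1,[6,7])] (sset [6,7]) = 1" by (simp add: mono_def fadd_def fscale_def fzero_def)
  have iv: "(\<not> Epage_eq G 2 3 0 2) \<longleftrightarrow> \<Theta> \<noteq> 0"
  proof -
    have EE: "Epage_eq G 2 3 0 2 \<longleftrightarrow> Zr G 2 0 2 = Zr G 3 0 2" using B2 B3 by (simp add: Epage_eq_def)
    show ?thesis
    proof (cases "\<Theta> = 0")
      case True
      have hT0: "K * K = 4 * complex_of_real a * complex_of_real a * complex_of_real b * complex_of_real b"
        using ThC True by simp
      obtain X Y' where w67b: "W3 G (lc [(1,[6,7])]) X Y'"
        using V34b[OF dd hP hA hB hY hT0[unfolded K_def]] unfolding G_def by blast
      have "Zr G 2 0 2 = Zr G 3 0 2"
      proof (intro set_eqI iffI)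
        fix \<alpha> assume "\<alpha> \<in> Zr G 2 0 2"
        then have aK: "\<alpha> \<in> KER" using Z2 by simp
        have "\<exists>x1 x2. W3 G \<alpha> x1 x2"
          using dec[OF aK] W3_cons[OF Wi_W3[OF w45] W3_cons[OF Wi_W3[OF w46] W3_cons[OF Wi_W3[OF w47]
             W3_cons[OF Wi_W3[OF w57] W3_cons[OF w67b W3_nil]]]]] by metis
        then show "\<alpha> \<in> Zr G 3 0 2" by (simp add: Zr3)
      next
        fix \<alpha> assume "\<alpha> \<in> Zr G 3 0 2"
        then show "\<alpha> \<in> Zr G 2 0 2" by (auto simp: Zr3 Zr2 dest: W3_W2)
      qed
      then show ?thesis using EE True by simp
    next
      case False
      have "lc [(1,[6,7])] \<in> Zr G 2 0 2" using Z2 vK[OF w67] by simp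
      moreover have "lc [(1,[6,7])] \<notin> Zr G 3 0 2"
      proof
        assume "lc [(1,[6,7])] \<in> Zr G 3 0 2"
        then obtain x1 x2 where "W3 G (lc [(1,[6,7])]) x1 x2" by (auto simp: Zr3)
        from notZ3[OF False this] v67at show False by simp
      qed
      ultimately show ?thesis using EE False by blast
    qed
  qed
  have v: "\<forall>r\<ge>3. Epage_spanned G r 0 2 [w2 4 5, w2 4 6, w2 5 7]" if T: "\<Theta> \<noteq> 0"
  proof (intro allI impI)
    fix r :: nat assume r: "r \<ge> 3"
    have Br: "Br G r 0 2 = BR" using BRr r by simp
    show "Epage_spanned G r 0 2 [w2 4 5, w2 4 6, w2 5 7]"
      unfolding Epage_spanned_def Br
    proof (intro conjI ballI)
      show "set [w2 4 5, w2 4 6, w2 5 7] \<subseteq> Zr G r 0 2"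
        using Zr_ge3_in[OF r w45] Zr_ge3_in[OF r w46] Zr_ge3_in[OF r w57] by (simp add: w2_eq del: lc.simps)
    next
      fix \<alpha> assume a: "\<alpha> \<in> Zr G r 0 2"
      then have "\<alpha> \<in> Zr G 3 0 2" by (rule Zr_ge3_sub[OF r])
      then obtain x1 x2 where W: "W3 G \<alpha> x1 x2" by (auto simp: Zr3)
      have z: "\<alpha> (sset [6,7]) = 0" by (rule notZ3[OF T W])
      have aK: "\<alpha> \<in> KER" using W3_W2[OF W] by (simp add: W2_def KER_def)
      have d: "\<alpha> = lc [(\<alpha> (sset [4,5]), [4,5]), (\<alpha> (sset [4,6]), [4,6]), (\<alpha> (sset [4,7]), [4,7]), (\<alpha> (sset [5,7]), [5,7]), (0, [6,7])]"
        using dec[OF aK] z by simp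
      show "\<exists>cs \<beta>. length cs = length [w2 4 5, w2 4 6, w2 5 7] \<and> \<beta> \<in> BR \<and> \<alpha> = fadd (lincomb cs [w2 4 5, w2 4 6, w2 5 7]) \<beta>"
      proof (intro exI conjI)
        show "length [\<alpha> (sset [4,5]), \<alpha> (sset [4,6]), \<alpha> (sset [5,7])] = length [w2 4 5, w2 4 6, w2 5 7]" by simp
        show "dbar G (lc [(\<alpha> (sset [4,7]),[6])]) \<in> BR" by (rule inBR)
        show "\<alpha> = fadd (lincomb [\<alpha> (sset [4,5]), \<alpha> (sset [4,6]), \<alpha> (sset [5,7])] [w2 4 5, w2 4 6, w2 5 7])
           (dbar G (lc [(\<alpha> (sset [4,7]),[6])]))"
          using d span_eq3 unfolding G_def by (rule trans)
      qed
    qed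
  qed
  show ?thesis
    unfolding Let_def dgG \<Theta>_def[symmetric] using E12 S1 S2 iv v by blast
qed

end
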